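(* Let $\mathcal F$ be an RKHS on $\mathcal Z$ with kernel $K$, equipped with the RKHS norm $\|\cdot\|_K$, and let $U,\delta,\lambda>0$. Then for any $h$, $$\sup_{f\in\mathcal F}\ \Psi_n(h,f)-\lambda\Big(\|f\|_K^2+\frac U{\delta^2}\|f\|_{2,n}^2\Big)=\frac1{4\lambda}\psi_n^\top K_n^{1/2}\Big(\frac U{n\delta^2}K_n+I\Big)^{-1}K_n^{1/2}\psi_n=\frac1{4\lambda}\psi_n^\top K_n\Big(\frac U{n\delta^2}K_n+I\Big)^{-1}\psi_n,$$ where $K_n=(K(z_i,z_j))_{i,j=1}^n$ and $\psi_n=(\frac1n(y_i-h(x_i)))_{i=1}^n$.
   Context: Samples $(y_i,x_i,z_i)_{i=1}^n$. $\Psi_n(h,f)=\frac1n\sum_i(y_i-h(x_i))f(z_i)$ and $\|f\|_{2,n}^2=\frac1n\sum_if(z_i)^2$. *)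

theory Defs
  imports "HOL-Analysis.Analysis"
begin

text \<open>An RKHS on the type 'z with kernel K: a Hilbert space 'f whose elements are
  identified (injectively) with functions 'z => real via ev, such that for every z the
  kernel section K(.,z) belongs to the space and reproduces evaluation at z.\<close>
definition rkhs :: "('f::{real_inner,complete_space} \<Rightarrow> 'z \<Rightarrow> real) \<Rightarrow> ('z \<Rightarrow> 'z \<Rightarrow> real) \<Rightarrow> bool" where
  "rkhs ev K \<longleftrightarrow> inj ev \<and>
     (\<forall>z. \<exists>k. (\<forall>w. ev k w = K w z) \<and> (\<forall>f. ev f z = inner f k))"

definition psd_mat :: "real^'n^'n \<Rightarrow> bool" where
  "psd_mat S \<longleftrightarrow> transpose S = S \<and> (\<forall>v. 0 \<le> v \<bullet> (S *v v))"

definition psd_sqrt :: "real^'n^'n \<Rightarrow> real^'n^'n" where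
  "psd_sqrt A = (THE S. psd_mat S \<and> S ** S = A)"

end

theory Submission imports Defs begin

lemma sym_inner:
  fixes A :: "real^'n^'n"
  assumes "transpose A = A"
  shows "x \<bullet> (A *v y) = (A *v x) \<bullet> y"
proof -
  have "x \<bullet> (A *v y) = (x v* A) \<bullet> y" by (simp add: dot_lmul_matrix)
  also have "x v* A = transpose A *v x" by simp
  finally show ?thesis using assms by simp
qed

lemma quad_nonneg_zero:
  fixes a c :: real
  assumes "\<And>t. 0 \<le> 2 * t * a + t\<^sup>2 * c" and "a \<ge> 0"
  shows "a = 0"
proof (cases "c \<le> 0")
  case True
  have "0 \<le> 2 * (-1) * a + (-1)\<^sup>2 * c" by (rule assms(1))
  then show ?thesis using True assms(2) by simp
next
  case False
  have "0 \<le> 2 * (-a/c) * a + (-a/c)\<^sup>2 * c" by (rule assms(1))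
  also have "\<dots> = - (a\<^sup>2 / c)" using False by (simp add: power2_eq_square field_simps)
  finally have "a\<^sup>2 / c \<le> 0" by simp
  then have "a\<^sup>2 \<le> 0" using False by (simp add: divide_le_0_iff)
  then show ?thesis by simp
qed

lemma eig_step:
  fixes A :: "real^'n^'n"
  assumes symA: "transpose A = A"
    and eigE: "\<And>e. e \<in> E \<Longrightarrow> A *v e = (e \<bullet> (A *v e)) *\<^sub>R e"
    and x0: "x0 \<noteq> 0" "\<And>e. e \<in> E \<Longrightarrow> e \<bullet> x0 = 0"
  shows "\<exists>v. (\<forall>e\<in>E. e \<bullet> v = 0) \<and> norm v = 1 \<and> A *v v = (v \<bullet> (A *v v)) *\<^sub>R v"
proof -
  define S where "S = {x. \<forall>e\<in>E. e \<bullet> x = 0}"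
  have subS: "subspace S" unfolding S_def subspace_def by (auto simp: inner_add_right)
  have invS: "A *v x \<in> S" if "x \<in> S" for x
  proof -
    have "e \<bullet> (A *v x) = 0" if "e \<in> E" for e
    proof -
      have "e \<bullet> (A *v x) = (A *v e) \<bullet> x" by (rule sym_inner[OF symA])
      also have "\<dots> = (e \<bullet> (A *v e)) * (e \<bullet> x)" by (subst eigE[OF that]) simp
      also have "\<dots> = 0" using \<open>x \<in> S\<close> that by (simp add: S_def)
      finally show ?thesis .
    qed
    then show ?thesis by (simp add: S_def)
  qed
  have clS: "closed S"
  proof -
    have "S = (\<Inter>e\<in>E. {x. e \<bullet> x = 0})" by (auto simp: S_def)
    moreover have "closed {x. e \<bullet> x = (0::real)}" for e :: "real^'n"
      by (rule closed_hyperplane)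
    ultimately show ?thesis by auto
  qed
  define T where "T = S \<inter> sphere 0 1"
  have cT: "compact T" unfolding T_def by (rule closed_Int_compact[OF clS compact_sphere])
  have x0S: "x0 \<in> S" using x0 by (simp add: S_def)
  have "(1 / norm x0) *\<^sub>R x0 \<in> T" using x0S x0(1) subS unfolding T_def
    by (auto simp: subspace_scale)
  then have neT: "T \<noteq> {}" by auto
  define q where "q = (\<lambda>u::real^'n. u \<bullet> (A *v u))"
  have cq: "continuous_on T q" unfolding q_def
    by (intro continuous_intros linear_continuous_on matrix_vector_mul_bounded_linear)
  obtain v where vT: "v \<in> T" and vmax: "\<And>u. u \<in> T \<Longrightarrow> q u \<le> q v"
    using continuous_attains_sup[OF cT neT cq] by blast
  define l where "l = q v"
  have vS: "v \<in> S" and nv: "norm v = 1" using vT by (auto simp: T_def)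
  have bound: "q u \<le> l * (u \<bullet> u)" if "u \<in> S" for u
  proof (cases "u = 0")
    case True then show ?thesis by (simp add: q_def)
  next
    case False
    have "(1 / norm u) *\<^sub>R u \<in> T" using that False subS unfolding T_def
      by (auto simp: subspace_scale)
    then have "q ((1 / norm u) *\<^sub>R u) \<le> l" using vmax l_def by blast
    moreover have "q ((1 / norm u) *\<^sub>R u) = q u / (u \<bullet> u)"
      by (simp add: q_def matrix_vector_mult_scaleR power2_norm_eq_inner[symmetric] power2_eq_square)
    moreover have "u \<bullet> u > 0" using False by simp
    ultimately show ?thesis by (simp add: divide_le_eq mult.commute)
  qed
  define w where "w = l *\<^sub>R v - A *v v"
  have wS: "w \<in> S" unfolding w_def using vS invS subS
    by (intro subspace_diff subspace_scale) auto
  have vv: "v \<bullet> v = 1" using nv by (simp add: norm_eq_1)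
  define c where "c = l * (w \<bullet> w) - q w"
  have wv: "w \<bullet> v = 0"
    by (simp add: w_def q_def l_def inner_diff_left inner_diff_right vv inner_commute)
  have vAw: "v \<bullet> (A *v w) = - (w \<bullet> w)"
  proof -
    have "w \<bullet> (A *v v) = (A *v w) \<bullet> v" by (rule sym_inner[OF symA])
    moreover have "w \<bullet> w = l * (w \<bullet> v) - w \<bullet> (A *v v)"
      by (simp add: w_def inner_diff_right inner_diff_left inner_commute algebra_simps)
    ultimately show ?thesis using wv by (simp add: inner_commute)
  qed
  have key: "0 \<le> 2 * t * (w \<bullet> w) + t\<^sup>2 * c" for t
  proof -
    have "v + t *\<^sub>R w \<in> S" using vS wS subS by (intro subspace_add subspace_scale) auto
    then have "q (v + t *\<^sub>R w) \<le> l * ((v + t *\<^sub>R w) \<bullet> (v + t *\<^sub>R w))" by (rule bound)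
    moreover have "q (v + t *\<^sub>R w) = l + 2 * t * (v \<bullet> (A *v w)) + t\<^sup>2 * q w"
    proof -
      have "w \<bullet> (A *v v) = (A *v w) \<bullet> v" by (rule sym_inner[OF symA])
      then show ?thesis
        by (simp add: q_def l_def matrix_vector_right_distrib matrix_vector_mult_scaleR
          inner_add_left inner_add_right power2_eq_square algebra_simps inner_commute)
    qed
    moreover have "(v + t *\<^sub>R w) \<bullet> (v + t *\<^sub>R w) = 1 + t\<^sup>2 * (w \<bullet> w)"
      using vv wv by (simp add: inner_add_left inner_add_right power2_eq_square inner_commute)
    ultimately have "l + 2 * t * (- (w \<bullet> w)) + t\<^sup>2 * q w \<le> l * (1 + t\<^sup>2 * (w \<bullet> w))"
      unfolding vAw by simp
    moreover have "l * (1 + t\<^sup>2 * (w \<bullet> w)) = l + t\<^sup>2 * (l * (w \<bullet> w))"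
      by (simp add: algebra_simps)
    moreover have "t\<^sup>2 * c = t\<^sup>2 * (l * (w \<bullet> w)) - t\<^sup>2 * q w"
      by (simp add: c_def algebra_simps)
    ultimately show ?thesis by linarith
  qed
  have "w \<bullet> w = 0" by (rule quad_nonneg_zero[OF key]) simp
  then have "w = 0" by simp
  then have "A *v v = l *\<^sub>R v" by (simp add: w_def)
  then show ?thesis using vS nv by (auto simp: S_def l_def q_def)
qed


definition okE :: "real^'n^'n \<Rightarrow> (real^'n) set \<Rightarrow> bool" where
  "okE A E \<longleftrightarrow> pairwise orthogonal E \<and> (\<forall>e\<in>E. norm e = 1 \<and> A *v e = (e \<bullet> (A *v e)) *\<^sub>R e)"

lemma okE_indep: "okE A E \<Longrightarrow> independent E"
  unfolding okE_def by (rule pairwise_orthogonal_independent) auto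

lemma eig_extend:
  fixes A :: "real^'n^'n"
  assumes symA: "transpose A = A" and ok: "okE A E" and ns: "span E \<noteq> UNIV"
  shows "\<exists>v. v \<notin> E \<and> okE A (insert v E)"
proof -
  have finE: "finite E" using ok unfolding okE_def by (simp add: pairwise_orthogonal_imp_finite)
  obtain x where x: "x \<notin> span E" using ns by auto
  define r where "r = x - (\<Sum>b\<in>E. (b \<bullet> x / (b \<bullet> b)) *\<^sub>R b)"
  have orth: "b \<bullet> r = 0" if "b \<in> E" for b
    using Gram_Schmidt_step[of E b x] ok that span_base[OF that]
    unfolding okE_def r_def orthogonal_def by auto
  have "r \<noteq> 0"
  proof
    assume "r = 0"
    then have "x = (\<Sum>b\<in>E. (b \<bullet> x / (b \<bullet> b)) *\<^sub>R b)" by (simp add: r_def)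
    also have "\<dots> \<in> span E" by (intro span_sum span_scale span_base)
    finally show False using x by simp
  qed
  then obtain v where v: "\<forall>e\<in>E. e \<bullet> v = 0" "norm v = 1" "A *v v = (v \<bullet> (A *v v)) *\<^sub>R v"
    using eig_step[OF symA, of E r] ok orth unfolding okE_def by blast
  have vE: "v \<notin> E"
  proof
    assume "v \<in> E"
    then have "v \<bullet> v = 0" using v(1) by blast
    then show False using v(2) by simp
  qed
  have "okE A (insert v E)" using ok v unfolding okE_def
    by (auto simp: pairwise_insert orthogonal_def inner_commute)
  then show ?thesis using vE by blast
qed

lemma eig_basis:
  fixes A :: "real^'n^'n"
  assumes symA: "transpose A = A"
  shows "\<exists>E. okE A E \<and> finite E \<and> span E = UNIV"
proof -
  have "\<exists>E. okE A E \<and> (span E = UNIV \<or> k \<le> card E)" for k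
  proof (induction k)
    case 0
    have "okE A {}" by (simp add: okE_def)
    then show ?case by blast
  next
    case (Suc k)
    then obtain E where E: "okE A E" "span E = UNIV \<or> k \<le> card E" by blast
    show ?case
    proof (cases "span E = UNIV")
      case True then show ?thesis using E by blast
    next
      case False
      then obtain v where v: "v \<notin> E" "okE A (insert v E)"
        using eig_extend[OF symA E(1)] by blast
      have "finite E" using okE_indep[OF E(1)] independent_bound by blast
      then have "card (insert v E) = Suc (card E)" using v by simp
      then show ?thesis using v E False by auto
    qed
  qed
  then obtain E where E: "okE A E" "span E = UNIV \<or> Suc DIM(real^'n) \<le> card E" by blast
  have "finite E \<and> card E \<le> DIM(real^'n)" using okE_indep[OF E(1)] independent_bound by blast
  then show ?thesis using E by auto
qed


lemma okE_inner:
  assumes "okE A E" "b \<in> E" "c \<in> E"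
  shows "c \<bullet> b = (if b = c then 1 else 0)"
proof (cases "b = c")
  case True
  then have "norm c = 1" using assms by (simp add: okE_def)
  then show ?thesis using True by (simp add: norm_eq_1)
next
  case False
  then have "c \<noteq> b" by simp
  then have "orthogonal c b" using assms unfolding okE_def pairwise_def by blast
  then show ?thesis using False by (simp add: orthogonal_def)
qed

lemma okE_sum_inner:
  assumes "okE A E" "finite E" "c \<in> E"
  shows "(\<Sum>b\<in>E. f b * (c \<bullet> b)) = f c"
proof -
  have "(\<Sum>b\<in>E. f b * (c \<bullet> b)) = (\<Sum>b\<in>E. if b = c then f b else 0)"
    using okE_inner[OF assms(1) _ assms(3)] by (intro sum.cong) auto
  also have "\<dots> = f c" using assms by (simp add: sum.delta')
  finally show ?thesis .
qed

lemma okE_expand: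
  assumes ok: "okE A E" and fin: "finite E" and sp: "span E = UNIV"
  shows "x = (\<Sum>b\<in>E. (b \<bullet> x) *\<^sub>R b)"
proof -
  define r where "r = x - (\<Sum>b\<in>E. (b \<bullet> x) *\<^sub>R b)"
  have oc: "orthogonal r c" if "c \<in> E" for c
  proof -
    have "c \<bullet> r = c \<bullet> x - (\<Sum>b\<in>E. (b \<bullet> x) * (c \<bullet> b))"
      by (simp add: r_def inner_diff_right inner_sum_right)
    also have "\<dots> = 0" using okE_sum_inner[OF ok fin that, of "\<lambda>b. b \<bullet> x"] by simp
    finally show ?thesis by (simp add: orthogonal_def inner_commute)
  qed
  have "r \<in> span E" using sp by simp
  then have "orthogonal r r" using oc by (rule orthogonal_to_span)
  then have "r = 0" by (simp add: orthogonal_def)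
  then show ?thesis by (simp add: r_def)
qed

lemma psd_sqrt_prop:
  fixes A :: "real^'n^'n"
  assumes psd: "psd_mat A"
  shows "psd_mat (psd_sqrt A) \<and> psd_sqrt A ** psd_sqrt A = A"
proof -
  have symA: "transpose A = A" using psd by (simp add: psd_mat_def)
  obtain E where ok: "okE A E" and fin: "finite E" and sp: "span E = UNIV"
    using eig_basis[OF symA] by blast
  have eig: "A *v b = (b \<bullet> (A *v b)) *\<^sub>R b" if "b \<in> E" for b
    using ok that by (simp add: okE_def)
  have nb: "b \<bullet> b = 1" if "b \<in> E" for b
    using ok that by (simp add: okE_def norm_eq_1)
  define s where "s b = sqrt (b \<bullet> (A *v b))" for b
  have lam_nn: "0 \<le> b \<bullet> (A *v b)" for b using psd by (simp add: psd_mat_def)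
  have s2: "s b * s b = b \<bullet> (A *v b)" for b using lam_nn[of b] by (simp add: s_def)
  have s_nn: "0 \<le> s b" for b using lam_nn[of b] by (simp add: s_def)
  define Sm :: "real^'n^'n" where "Sm = (\<chi> i j. \<Sum>b\<in>E. s b * b$i * b$j)"
  have Smv: "Sm *v x = (\<Sum>b\<in>E. (s b * (b \<bullet> x)) *\<^sub>R b)" for x
  proof -
    have "(Sm *v x)$i = (\<Sum>b\<in>E. (s b * (b \<bullet> x)) * b$i)" for i
    proof -
      have "(Sm *v x)$i = (\<Sum>j\<in>UNIV. \<Sum>b\<in>E. s b * b$i * b$j * x$j)"
        unfolding Sm_def matrix_vector_mult_def by (simp add: sum_distrib_right)
      also have "\<dots> = (\<Sum>b\<in>E. \<Sum>j\<in>UNIV. s b * b$i * b$j * x$j)" by (rule sum.swap)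
      also have "\<dots> = (\<Sum>b\<in>E. (s b * (b \<bullet> x)) * b$i)"
        unfolding inner_vec_def
        by (intro sum.cong refl) (simp add: sum_distrib_left sum_distrib_right mult_ac)
      finally show ?thesis .
    qed
    then show ?thesis by (simp add: vec_eq_iff sum_component)
  qed
  have eigx: "A *v x = (\<Sum>b\<in>E. ((b \<bullet> x) * (b \<bullet> (A *v b))) *\<^sub>R b)" for x
  proof -
    have "A *v x = A *v (\<Sum>b\<in>E. (b \<bullet> x) *\<^sub>R b)" by (rule arg_cong[OF okE_expand[OF ok fin sp, of x]])
    also have "\<dots> = (\<Sum>b\<in>E. (b \<bullet> x) *\<^sub>R (A *v b))"
      by (simp add: linear_sum[OF matrix_vector_mul_linear] matrix_vector_mult_scaleR)
    also have "\<dots> = (\<Sum>b\<in>E. ((b \<bullet> x) * (b \<bullet> (A *v b))) *\<^sub>R b)"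
      by (intro sum.cong refl) (subst eig, auto)
    finally show ?thesis .
  qed
  have P1: "psd_mat Sm"
  proof -
    have "transpose Sm = Sm" unfolding Sm_def transpose_def by (simp add: vec_eq_iff mult.commute mult.left_commute)
    moreover have "0 \<le> v \<bullet> (Sm *v v)" for v
    proof -
      have "v \<bullet> (Sm *v v) = (\<Sum>b\<in>E. s b * (b \<bullet> v)\<^sup>2)"
        by (simp add: Smv inner_sum_right power2_eq_square inner_commute mult.assoc)
      also have "\<dots> \<ge> 0" using s_nn by (intro sum_nonneg) auto
      finally show ?thesis .
    qed
    ultimately show ?thesis by (simp add: psd_mat_def)
  qed
  have SmE: "Sm *v b = s b *\<^sub>R b" if "b \<in> E" for b
  proof -
    have "Sm *v b = (\<Sum>c\<in>E. if c = b then s c *\<^sub>R c else 0)"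
      unfolding Smv using okE_inner[OF ok _ that] nb
      by (intro sum.cong refl) (auto simp: inner_commute)
    then show ?thesis using fin that by (simp add: sum.delta')
  qed
  have P2: "Sm ** Sm = A"
  proof -
    have "(Sm ** Sm) *v x = A *v x" for x
    proof -
      have "(Sm ** Sm) *v x = Sm *v (Sm *v x)" by (simp add: matrix_vector_mul_assoc)
      also have "\<dots> = (\<Sum>b\<in>E. (s b * (b \<bullet> x)) *\<^sub>R (Sm *v b))"
        unfolding Smv[of x]
        by (simp add: linear_sum[OF matrix_vector_mul_linear] matrix_vector_mult_scaleR)
      also have "\<dots> = (\<Sum>b\<in>E. ((b \<bullet> x) * (b \<bullet> (A *v b))) *\<^sub>R b)"
        by (intro sum.cong refl) (simp add: SmE s2[symmetric] mult_ac)
      finally show ?thesis using eigx[of x] by simp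
    qed
    then show ?thesis by (simp add: matrix_eq)
  qed
  have uniq: "T = Sm" if T: "psd_mat T" "T ** T = A" for T
  proof -
    have symT: "transpose T = T" using T by (simp add: psd_mat_def)
    have TE: "T *v b = s b *\<^sub>R b" if b: "b \<in> E" for b
    proof -
      define \<mu> where "\<mu> = s b"
      have Ab: "A *v b = (\<mu> * \<mu>) *\<^sub>R b" using eig[OF b] s2[of b] by (simp add: \<mu>_def)
      have TT: "T *v (T *v b) = A *v b" using T(2) by (simp add: matrix_vector_mul_assoc)
      show ?thesis
      proof (cases "\<mu> = 0")
        case True
        have "(T *v b) \<bullet> (T *v b) = b \<bullet> (T *v (T *v b))" by (simp add: sym_inner[OF symT])
        also have "\<dots> = 0" using TT Ab True by simp
        finally have "T *v b = 0" by simp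
        then show ?thesis using True by (simp add: \<mu>_def)
      next
        case False
        then have mpos: "\<mu> > 0" using s_nn[of b] by (simp add: \<mu>_def)
        define u where "u = T *v b - \<mu> *\<^sub>R b"
        have "T *v u + \<mu> *\<^sub>R u = T *v (T *v b) - (\<mu> * \<mu>) *\<^sub>R b"
          by (simp add: u_def matrix_vector_mult_diff_distrib matrix_vector_mult_scaleR algebra_simps)
        also have "\<dots> = 0" using TT Ab by simp
        finally have Tu: "T *v u = - \<mu> *\<^sub>R u" by (simp add: eq_neg_iff_add_eq_0)
        have "0 \<le> u \<bullet> (T *v u)" using T by (simp add: psd_mat_def)
        also have "\<dots> = - \<mu> * (u \<bullet> u)" by (simp add: Tu)
        finally have "u \<bullet> u \<le> 0" using mpos by (simp add: mult_le_0_iff)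
        then have "u = 0" by (metis inner_eq_zero_iff inner_ge_zero order_antisym)
        then show ?thesis by (simp add: u_def \<mu>_def)
      qed
    qed
    have "T *v x = Sm *v x" for x
    proof -
      have "T *v x = T *v (\<Sum>b\<in>E. (b \<bullet> x) *\<^sub>R b)" by (rule arg_cong[OF okE_expand[OF ok fin sp, of x]])
      also have "\<dots> = (\<Sum>b\<in>E. (b \<bullet> x) *\<^sub>R (T *v b))"
        by (simp add: linear_sum[OF matrix_vector_mul_linear] matrix_vector_mult_scaleR)
      also have "\<dots> = Sm *v x" unfolding Smv
        by (intro sum.cong refl) (simp add: TE mult.commute)
      finally show ?thesis .
    qed
    then show ?thesis by (simp add: matrix_eq)
  qed
  have "psd_sqrt A = Sm" unfolding psd_sqrt_def
    by (rule the_equality) (use P1 P2 uniq in blast)+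
  then show ?thesis using P1 P2 by simp
qed

theorem proposition1:
  fixes ev :: "'f::{real_inner,complete_space} \<Rightarrow> 'z \<Rightarrow> real"
    and K :: "'z \<Rightarrow> 'z \<Rightarrow> real"
    and y :: "'n::finite \<Rightarrow> real" and x :: "'n \<Rightarrow> 'x" and z :: "'n \<Rightarrow> 'z"
    and h :: "'x \<Rightarrow> real"
    and U \<delta> lam :: real
  assumes "rkhs ev K" and "U > 0" and "\<delta> > 0" and "lam > 0"
  defines "n \<equiv> real CARD('n)"
  defines "Kn \<equiv> (\<chi> i j. K (z i) (z j)) :: real^'n^'n"
  defines "\<psi>n \<equiv> (\<chi> i. (y i - h (x i)) / n) :: real^'n"
  defines "\<Psi> \<equiv> \<lambda>f. (1 / n) * (\<Sum>i\<in>UNIV. (y i - h (x i)) * ev f (z i))"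
  defines "norm2n_sq \<equiv> \<lambda>f. (1 / n) * (\<Sum>i\<in>UNIV. (ev f (z i))\<^sup>2)"
  shows "(SUP f. \<Psi> f - lam * ((norm f)\<^sup>2 + U / \<delta>\<^sup>2 * norm2n_sq f))
           = 1 / (4 * lam) * (\<psi>n \<bullet> ((psd_sqrt Kn ** matrix_inv ((U / (n * \<delta>\<^sup>2)) *\<^sub>R Kn + mat 1)
                                    ** psd_sqrt Kn) *v \<psi>n))
       \<and> 1 / (4 * lam) * (\<psi>n \<bullet> ((psd_sqrt Kn ** matrix_inv ((U / (n * \<delta>\<^sup>2)) *\<^sub>R Kn + mat 1)
                                    ** psd_sqrt Kn) *v \<psi>n))
           = 1 / (4 * lam) * (\<psi>n \<bullet> ((Kn ** matrix_inv ((U / (n * \<delta>\<^sup>2)) *\<^sub>R Kn + mat 1)) *v \<psi>n))"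
proof -
  obtain kf where kf: "\<And>zz. (\<forall>w. ev (kf zz) w = K w zz) \<and> (\<forall>f. ev f zz = inner f (kf zz))"
    using assms(1) unfolding rkhs_def by metis
  define kk where "kk i = kf (z i)" for i
  have evk: "ev f (z i) = inner f (kk i)" for f i using kf unfolding kk_def by blast
  have Kn_ij: "Kn$i$j = inner (kk j) (kk i)" for i j
  proof -
    have k1: "ev (kf zz) w = K w zz" for zz w using kf by blast
    have "K (z i) (z j) = ev (kk j) (z i)" by (simp only: kk_def k1)
    then show ?thesis by (simp add: Kn_def evk)
  qed
  have npos: "n > 0" unfolding n_def by simp
  define c where "c = U / (n * \<delta>\<^sup>2)"
  have cpos: "c > 0" unfolding c_def using assms(2,3) npos by simp
  define M where "M = c *\<^sub>R Kn + mat 1"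
  define Mi where "Mi = matrix_inv M"
  have symK: "transpose Kn = Kn"
    by (simp add: transpose_def vec_eq_iff Kn_ij inner_commute)
  have quadK: "v \<bullet> (Kn *v v) = inner (\<Sum>i\<in>UNIV. v$i *\<^sub>R kk i) (\<Sum>i\<in>UNIV. v$i *\<^sub>R kk i)" for v
    by (simp add: inner_vec_def matrix_vector_mult_def Kn_ij inner_sum_left inner_sum_right
        sum_distrib_left mult_ac)
  have psdK: "psd_mat Kn" unfolding psd_mat_def using symK quadK by simp
  have Mv: "M *v v = c *\<^sub>R (Kn *v v) + v" for v
    by (simp add: M_def matrix_vector_mult_add_rdistrib scaleR_matrix_vector_assoc)
  have Minj: "v = 0" if "M *v v = 0" for v
  proof -
    have "0 = v \<bullet> (M *v v)" using that by simp
    also have "\<dots> = c * (v \<bullet> (Kn *v v)) + v \<bullet> v" by (simp add: Mv inner_add_right)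
    finally have "v \<bullet> v \<le> 0" using cpos psdK unfolding psd_mat_def
      by (smt (verit) mult_nonneg_nonneg)
    then show ?thesis by (metis inner_eq_zero_iff inner_ge_zero order_antisym)
  qed
  have invM: "invertible M"
    using Minj matrix_left_invertible_ker invertible_left_inverse by blast
  have MMi: "M ** Mi = mat 1" and MiM: "Mi ** M = mat 1"
  proof -
    have "\<exists>A'. M ** A' = mat 1 \<and> A' ** M = mat 1" using invM by (simp add: invertible_def)
    then have "M ** Mi = mat 1 \<and> Mi ** M = mat 1" unfolding Mi_def matrix_inv_def by (rule someI_ex)
    then show "M ** Mi = mat 1" "Mi ** M = mat 1" by auto
  qed
  define S where "S = psd_sqrt Kn"
  have SS: "S ** S = Kn" using psd_sqrt_prop[OF psdK] by (simp add: S_def)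
  have SM: "S ** M = M ** S"
  proof -
    have "(S ** M) *v v = (M ** S) *v v" for v
    proof -
      have "S *v (Kn *v v) = Kn *v (S *v v)"
        by (simp add: SS[symmetric] matrix_vector_mul_assoc matrix_mul_assoc)
      then show ?thesis
        by (simp add: matrix_vector_mul_assoc[symmetric] Mv matrix_vector_right_distrib
            matrix_vector_mult_scaleR)
    qed
    then show ?thesis by (simp add: matrix_eq)
  qed
  have MiS: "Mi ** S = S ** Mi"
  proof -
    have "Mi ** S = Mi ** S ** (M ** Mi)" by (simp add: MMi)
    also have "\<dots> = Mi ** (S ** M) ** Mi" by (simp add: matrix_mul_assoc)
    also have "\<dots> = (Mi ** M) ** S ** Mi" by (simp add: SM matrix_mul_assoc)
    also have "\<dots> = S ** Mi" by (simp add: MiM)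
    finally show ?thesis .
  qed
  have eq2: "S ** Mi ** S = Kn ** Mi"
    by (metis MiS SS matrix_mul_assoc)
  define \<psi> where "\<psi> = \<psi>n"
  define a where "a = (1 / (2 * lam)) *\<^sub>R (Mi *v \<psi>)"
  have Ma: "M *v a = (1 / (2 * lam)) *\<^sub>R \<psi>"
    by (simp add: a_def matrix_vector_mult_scaleR matrix_vector_mul_assoc MMi)
  have Ma_i: "a$i + c * (Kn *v a)$i = \<psi>$i / (2 * lam)" for i
  proof -
    have "(M *v a)$i = \<psi>$i / (2 * lam)" using Ma by simp
    then show ?thesis by (simp add: Mv add.commute)
  qed
  define fs where "fs = (\<Sum>j\<in>UNIV. a$j *\<^sub>R kk j)"
  define g where "g = (\<Sum>i\<in>UNIV. \<psi>$i *\<^sub>R kk i)"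
  define Q where "Q f = (norm f)\<^sup>2 + c * (\<Sum>i\<in>UNIV. (inner f (kk i))\<^sup>2)" for f
  define J where "J f = \<Psi> f - lam * ((norm f)\<^sup>2 + U / \<delta>\<^sup>2 * norm2n_sq f)" for f
  have J_eq: "J f = inner f g - lam * Q f" for f
  proof -
    have "\<Psi> f = inner f g"
      by (simp add: \<Psi>_def g_def \<psi>_def \<psi>n_def evk inner_sum_right sum_distrib_left mult_ac)
    moreover have "U / \<delta>\<^sup>2 * norm2n_sq f = c * (\<Sum>i\<in>UNIV. (inner f (kk i))\<^sup>2)"
      by (simp add: norm2n_sq_def c_def evk)
    ultimately show ?thesis by (simp add: J_def Q_def)
  qed
  have e_i: "inner fs (kk i) = (Kn *v a)$i" for i
    by (simp add: fs_def inner_sum_left matrix_vector_mult_def Kn_ij mult_ac)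
  have key: "inner d fs + c * (\<Sum>i\<in>UNIV. inner d (kk i) * inner fs (kk i)) = inner d g / (2 * lam)" for d
  proof -
    have "inner d fs + c * (\<Sum>i\<in>UNIV. inner d (kk i) * inner fs (kk i))
        = (\<Sum>i\<in>UNIV. inner d (kk i) * (a$i + c * (Kn *v a)$i))"
    proof -
      have "inner d fs = (\<Sum>i\<in>UNIV. a$i * inner d (kk i))" by (simp add: fs_def inner_sum_right)
      then show ?thesis by (simp add: e_i sum_distrib_left sum.distrib algebra_simps)
    qed
    also have "\<dots> = (\<Sum>i\<in>UNIV. inner d (kk i) * (\<psi>$i / (2 * lam)))" by (simp add: Ma_i)
    also have "\<dots> = inner d g / (2 * lam)"
      by (simp add: g_def inner_sum_right sum_divide_distrib mult_ac)
    finally show ?thesis .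
  qed
  have Jshift: "J (fs + d) = J fs - lam * Q d" for d
  proof -
    have n2: "(norm (fs + d))\<^sup>2 = (norm fs)\<^sup>2 + 2 * inner d fs + (norm d)\<^sup>2"
      by (simp add: power2_norm_eq_inner inner_add_left inner_add_right inner_commute)
    have s2: "(\<Sum>i\<in>UNIV. (inner (fs + d) (kk i))\<^sup>2) = (\<Sum>i\<in>UNIV. (inner fs (kk i))\<^sup>2)
        + 2 * (\<Sum>i\<in>UNIV. inner d (kk i) * inner fs (kk i)) + (\<Sum>i\<in>UNIV. (inner d (kk i))\<^sup>2)"
      by (simp add: inner_add_left power2_sum sum.distrib sum_distrib_left mult_ac)
    have "J (fs + d) = inner fs g + inner d g
        - lam * ((norm fs)\<^sup>2 + c * (\<Sum>i\<in>UNIV. (inner fs (kk i))\<^sup>2))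
        - 2 * lam * (inner d fs + c * (\<Sum>i\<in>UNIV. inner d (kk i) * inner fs (kk i)))
        - lam * Q d"
      unfolding J_eq Q_def n2 s2 by (simp add: inner_add_left algebra_simps)
    also have "\<dots> = J fs - lam * Q d"
      unfolding key J_eq Q_def using assms(4) by simp
    finally show ?thesis .
  qed
  have Qnn: "Q d \<ge> 0" for d unfolding Q_def using cpos by (simp add: sum_nonneg)
  have Jle: "J f \<le> J fs" for f
  proof -
    have "J f = J (fs + (f - fs))" by simp
    also have "\<dots> = J fs - lam * Q (f - fs)" by (rule Jshift)
    finally show ?thesis using Qnn[of "f - fs"] assms(4) by (simp add: mult_nonneg_nonneg)
  qed
  have Jfs: "J fs = 1 / (4 * lam) * (\<psi>n \<bullet> ((Kn ** Mi) *v \<psi>n))"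
  proof -
    have k0: "(norm fs)\<^sup>2 + c * (\<Sum>i\<in>UNIV. (inner fs (kk i))\<^sup>2) = inner fs g / (2 * lam)"
      using key[of fs] by (simp add: dot_square_norm power2_eq_square)
    have "J fs = inner fs g / 2" unfolding J_eq Q_def k0 using assms(4) by simp
    moreover have "inner fs g = \<psi> \<bullet> (Kn *v a)"
      by (simp add: g_def inner_sum_right e_i inner_vec_def mult_ac)
    moreover have "\<psi> \<bullet> (Kn *v a) = (1 / (2 * lam)) * (\<psi> \<bullet> ((Kn ** Mi) *v \<psi>))"
      by (simp add: a_def matrix_vector_mult_scaleR matrix_vector_mul_assoc)
    ultimately show ?thesis by (simp add: \<psi>_def)
  qed
  have sup: "(SUP f. J f) = J fs"
    by (rule cSup_eq_maximum) (auto intro: Jle)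
  show ?thesis
    using sup Jfs eq2 unfolding J_def S_def Mi_def M_def c_def by simp
qed

end
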